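(* Let $X$ be a nonempty set, $S$ a semigroup, and $\phi:\Gamma(X)\to E(S^1)$ a skeleton mapping. Then there is a unique semigroup homomorphism $\psi:FT^1(X)\to S^1$ such that $[g]\psi=g\phi$ for all $g\in\Gamma(X)$. Furthermore, the subsemigroup $\langle \Gamma(X)\phi\rangle=(FT^1(X))\psi$ of $S^1$ is a regular monoid with identity element $1\phi$.
   Context: Let $1$ be a symbol not in $X$. Elements of height $\ge 2$ are triples $g=(g^l,g^c,g^r)$. Set $\Gamma_0(X)=\{1\}$, $\Gamma_1(X)=X$, identify each $x\in X$ with $(1,x,1)$. For $i\ge 2$, $\Gamma_i(X)$ is the set of triples $g\in\Gamma_{i-1}(X)\times\Gamma_{i-2}(X)\times\Gamma_{i-1}(X)$ with $g^l\neq g^r$ and $g^c\in\{(g^l)^l,(g^l)^r\}\cap\{(g^r)^l,(g^r)^r\}$. $\Gamma(X)=\bigcup_{i\ge0}\Gamma_i(X)$. Let $\rho$ be the smallest congruence on $\Gamma(X)^+$ containing $(1g,g),(g1,g),(gg,g)$ for all $g\in\Gamma(X)$, and $(g^cg^lg,g)$, $(gg^rg^c,g)$, $(g^rg^cgg^cg^l,\,g^rg^cg^l)$ for all $g\in\Gamma_i(X)$, $i\ge2$. $FT^1(X)=\Gamma(X)^+/\rho$, $[u]$ the class of $u$. $S^1$ is $S$ with an identity adjoined if necessary; $E(\cdot)$ denotes the set of idempotents. For idempotents $e,f$ of a semigroup $R$, the sandwich set is $S(e,f)=\{h\in E(R): fh=h=he,\ ehf=ef\}$. A skeleton mapping is a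 mapping $\phi:\Gamma(X)\to E(S^1)$ such that (i) $\phi|_X$ is one-to-one with $X\phi\subseteq E(S)$; (ii) $(1\phi)(g\phi)=g\phi=(g\phi)(1\phi)$ for all $g\in X$; (iii) $g\phi\in S\big((g^r\phi)(g^c\phi),(g^c\phi)(g^l\phi)\big)$ (sandwich set in $S^1$) for all $g\in\Gamma_i(X)$ with $i\ge2$. *)

theory Defs
  imports Main
begin

text \<open>Elements of Gamma(X): the symbol 1 (One), generators x (Gen x, identified with (1,x,1)),
  and triples (g^l, g^c, g^r) (Tr l c r).\<close>
datatype 'x gam = One | Gen 'x | Tr "'x gam" "'x gam" "'x gam"

text \<open>Components; for a generator x = (1,x,1) we have x^l = 1, x^c = x, x^r = 1.
  The value at One is irrelevant (never used).\<close>
fun gl :: "'x gam \<Rightarrow> 'x gam" where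
  "gl (Tr l c r) = l" | "gl (Gen x) = One" | "gl One = One"
fun gc :: "'x gam \<Rightarrow> 'x gam" where
  "gc (Tr l c r) = c" | "gc (Gen x) = Gen x" | "gc One = One"
fun gr :: "'x gam \<Rightarrow> 'x gam" where
  "gr (Tr l c r) = r" | "gr (Gen x) = One" | "gr One = One"

fun Gam :: "'x set \<Rightarrow> nat \<Rightarrow> 'x gam set" where
  "Gam X 0 = {One}"
| "Gam X (Suc 0) = Gen ` X"
| "Gam X (Suc (Suc i)) =
     {Tr l c r | l c r. l \<in> Gam X (Suc i) \<and> c \<in> Gam X i \<and> r \<in> Gam X (Suc i) \<and> l \<noteq> r
        \<and> c \<in> {gl l, gr l} \<inter> {gl r, gr r}}"

definition GamAll :: "'x set \<Rightarrow> 'x gam set" where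
  "GamAll X = (\<Union>i. Gam X i)"

definition GPlus :: "'x set \<Rightarrow> 'x gam list set" where
  "GPlus X = {w. w \<noteq> [] \<and> set w \<subseteq> GamAll X}"

inductive rho :: "'x set \<Rightarrow> 'x gam list \<Rightarrow> 'x gam list \<Rightarrow> bool" for X where
  gen1: "g \<in> GamAll X \<Longrightarrow> rho X [One, g] [g]"
| gen2: "g \<in> GamAll X \<Longrightarrow> rho X [g, One] [g]"
| gen3: "g \<in> GamAll X \<Longrightarrow> rho X [g, g] [g]"
| gen4: "2 \<le> i \<Longrightarrow> g \<in> Gam X i \<Longrightarrow> rho X [gc g, gl g, g] [g]"
| gen5: "2 \<le> i \<Longrightarrow> g \<in> Gam X i \<Longrightarrow> rho X [g, gr g, gc g] [g]"
| gen6: "2 \<le> i \<Longrightarrow> g \<in> Gam X i \<Longrightarrow>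
          rho X [gr g, gc g, g, gc g, gl g] [gr g, gc g, gl g]"
| refl: "u \<in> GPlus X \<Longrightarrow> rho X u u"
| sym: "rho X u v \<Longrightarrow> rho X v u"
| trans: "rho X u v \<Longrightarrow> rho X v w \<Longrightarrow> rho X u w"
| cong_left: "rho X u v \<Longrightarrow> w \<in> GPlus X \<Longrightarrow> rho X (w @ u) (w @ v)"
| cong_right: "rho X u v \<Longrightarrow> w \<in> GPlus X \<Longrightarrow> rho X (u @ w) (v @ w)"

text \<open>The class [u] and the carrier of FT^1(X) = Gamma(X)^+ / rho.
  Multiplication in FT^1(X) is [u][v] = [uv].\<close>
definition rho_class :: "'x set \<Rightarrow> 'x gam list \<Rightarrow> 'x gam list set" where
  "rho_class X u = {v. rho X u v}"

definition FT :: "'x set \<Rightarrow> 'x gam list set set" where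
  "FT X = rho_class X ` GPlus X"

text \<open>S^1 is represented inside 'a option: Some s for s in S, and None is the adjoined
  identity, present only if S has no identity.\<close>
fun mult1 :: "'a::semigroup_mult option \<Rightarrow> 'a option \<Rightarrow> 'a option" where
  "mult1 None y = y"
| "mult1 (Some a) None = Some a"
| "mult1 (Some a) (Some b) = Some (a * b)"

definition has_identity :: "'a::semigroup_mult itself \<Rightarrow> bool" where
  "has_identity _ = (\<exists>e::'a. \<forall>s. e * s = s \<and> s * e = s)"

definition S1 :: "'a::semigroup_mult option set" where
  "S1 = (if has_identity TYPE('a) then range Some else insert None (range Some))"

definition E1 :: "'a::semigroup_mult option set" where
  "E1 = {e \<in> S1. mult1 e e = e}"

definition ES :: "'a::semigroup_mult set" where
  "ES = {e. e * e = e}"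

definition sandwich :: "'a::semigroup_mult option \<Rightarrow> 'a option \<Rightarrow> 'a option set" where
  "sandwich e f = {h \<in> E1. mult1 f h = h \<and> mult1 h e = h \<and> mult1 (mult1 e h) f = mult1 e f}"

definition skeleton :: "'x set \<Rightarrow> ('x gam \<Rightarrow> 'a::semigroup_mult option) \<Rightarrow> bool" where
  "skeleton X \<phi> \<longleftrightarrow>
     (\<forall>g \<in> GamAll X. \<phi> g \<in> E1)
   \<and> inj_on (\<lambda>x. \<phi> (Gen x)) X
   \<and> (\<forall>x \<in> X. \<phi> (Gen x) \<in> Some ` ES)
   \<and> (\<forall>x \<in> X. mult1 (\<phi> One) (\<phi> (Gen x)) = \<phi> (Gen x) \<and> mult1 (\<phi> (Gen x)) (\<phi> One) = \<phi> (Gen x))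
   \<and> (\<forall>i \<ge> 2. \<forall>g \<in> Gam X i.
        \<phi> g \<in> sandwich (mult1 (\<phi> (gr g)) (\<phi> (gc g))) (mult1 (\<phi> (gc g)) (\<phi> (gl g))))"

definition ft_hom :: "'x set \<Rightarrow> ('x gam list set \<Rightarrow> 'a::semigroup_mult option) \<Rightarrow> bool" where
  "ft_hom X \<psi> \<longleftrightarrow> (\<forall>c \<in> FT X. \<psi> c \<in> S1)
     \<and> (\<forall>u \<in> GPlus X. \<forall>v \<in> GPlus X.
          \<psi> (rho_class X (u @ v)) = mult1 (\<psi> (rho_class X u)) (\<psi> (rho_class X v)))"

inductive_set sgen :: "'a::semigroup_mult option set \<Rightarrow> 'a option set" for A where
  base: "a \<in> A \<Longrightarrow> a \<in> sgen A"
| mult: "a \<in> sgen A \<Longrightarrow> b \<in> sgen A \<Longrightarrow> mult1 a b \<in> sgen A"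

definition regular_monoid_with_id :: "'a::semigroup_mult option set \<Rightarrow> 'a option \<Rightarrow> bool" where
  "regular_monoid_with_id M e \<longleftrightarrow>
     (\<forall>a \<in> M. \<forall>b \<in> M. mult1 a b \<in> M)
   \<and> e \<in> M \<and> (\<forall>a \<in> M. mult1 e a = a \<and> mult1 a e = a)
   \<and> (\<forall>a \<in> M. \<exists>b \<in> M. mult1 (mult1 a b) a = a)"

end

theory Submission
  imports Defs
begin

notation mult1 (infixl "\<cdot>" 70)

lemma mult1_assoc: "(a \<cdot> b) \<cdot> c = a \<cdot> (b \<cdot> c)"
  by (cases a; cases b; cases c) (auto simp: mult.assoc)

lemma mult1_None_right[simp]: "a \<cdot> None = a"
  by (cases a) auto

fun pr :: "('x gam \<Rightarrow> 'a::semigroup_mult option) \<Rightarrow> 'x gam list \<Rightarrow> 'a option" where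
  "pr f [] = None"
| "pr f (g # gs) = f g \<cdot> pr f gs"

lemma pr_append: "pr f (xs @ ys) = pr f xs \<cdot> pr f ys"
  by (induction xs) (auto simp: mult1_assoc)

lemma pr_single[simp]: "pr f [g] = f g" by simp

fun lev :: "'x gam \<Rightarrow> nat" where
  "lev One = 0" | "lev (Gen x) = 1" | "lev (Tr l c r) = Suc (lev l)"

lemma Gam_lev: "g \<in> Gam X i \<Longrightarrow> lev g = i"
  by (induction X i arbitrary: g rule: Gam.induct) auto

lemma Gam_unique: "g \<in> Gam X i \<Longrightarrow> g \<in> Gam X j \<Longrightarrow> i = j"
  using Gam_lev by metis

lemma Gam_SS: "g \<in> Gam X (Suc (Suc j)) \<Longrightarrow> \<exists>l c r. g = Tr l c r \<and> l \<in> Gam X (Suc j) \<and> c \<in> Gam X j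
   \<and> r \<in> Gam X (Suc j) \<and> l \<noteq> r \<and> (c = gl l \<or> c = gr l) \<and> (c = gl r \<or> c = gr r)"
  by auto

lemma Gam_SS_intro: "l \<in> Gam X (Suc j) \<Longrightarrow> c \<in> Gam X j \<Longrightarrow> r \<in> Gam X (Suc j) \<Longrightarrow> l \<noteq> r
  \<Longrightarrow> (c = gl l \<or> c = gr l) \<Longrightarrow> (c = gl r \<or> c = gr r) \<Longrightarrow> Tr l c r \<in> Gam X (Suc (Suc j))"
  by auto

lemma Gam_comp: "g \<in> Gam X (Suc j) \<Longrightarrow> gl g \<in> Gam X j \<and> gr g \<in> Gam X j"
  by (cases j) auto

lemma Gam_1: "g \<in> Gam X (Suc 0) \<Longrightarrow> \<exists>x\<in>X. g = Gen x" by auto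

lemma GamAll_I: "g \<in> Gam X i \<Longrightarrow> g \<in> GamAll X"
  unfolding GamAll_def by auto

lemma One_GamAll: "One \<in> GamAll X"
  using GamAll_I[of One X 0] by simp

definition dn :: "'x set \<Rightarrow> 'x gam \<Rightarrow> 'x gam \<Rightarrow> bool" where
  "dn X p q \<longleftrightarrow> (\<exists>j. p \<in> Gam X (Suc j) \<and> q \<in> Gam X j \<and> (q = gl p \<or> q = gr p))"

lemma dn_GamAll: "dn X p q \<Longrightarrow> p \<in> GamAll X \<and> q \<in> GamAll X"
  unfolding dn_def using GamAll_I by blast

lemma S1_mult: "a \<in> S1 \<Longrightarrow> b \<in> S1 \<Longrightarrow> a \<cdot> b \<in> S1"
  unfolding S1_def by (cases a; cases b) (auto split: if_splits)

definition mountain :: "'x set \<Rightarrow> 'x gam list \<Rightarrow> bool" where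
  "mountain X m \<longleftrightarrow> (\<exists>A D. m = A @ D \<and> A \<noteq> [] \<and> successively (\<lambda>a b. dn X b a) A
      \<and> successively (dn X) (last A # D))"

definition adj :: "'x set \<Rightarrow> 'x gam \<Rightarrow> 'x gam \<Rightarrow> bool" where
  "adj X a b \<longleftrightarrow> dn X a b \<or> dn X b a"

lemma mountain_nonempty: "mountain X m \<Longrightarrow> m \<noteq> []"
  unfolding mountain_def by auto

lemma last_Cons_append: "last (a # D) = last (A @ D) \<or> \<not> (last A = a \<and> A \<noteq> [])"
  by (cases D) auto

lemma mountain_snoc_dn:
  assumes "mountain X m" "dn X (last m) v"
  shows "mountain X (m @ [v])"
proof -
  obtain A D where AD: "m = A @ D" "A \<noteq> []" "successively (\<lambda>a b. dn X b a) A"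
      "successively (dn X) (last A # D)" using assms(1) unfolding mountain_def by blast
  have "last (last A # D) = last m" using AD by (cases D) auto
  then have "successively (dn X) ((last A # D) @ [v])"
    using AD(4) assms(2) by (simp only: successively_append_iff) auto
  then have "successively (dn X) (last A # D @ [v])" by simp
  then show ?thesis unfolding mountain_def using AD
    by (intro exI[of _ A] exI[of _ "D @ [v]"]) auto
qed

context
  fixes X :: "'x set" and P :: "'x gam \<Rightarrow> 'a::semigroup_mult option"
  assumes sk: "skeleton X P"
begin

lemma idem: "g \<in> GamAll X \<Longrightarrow> P g \<cdot> P g = P g"
  using sk unfolding skeleton_def E1_def by auto

lemma inS1: "g \<in> GamAll X \<Longrightarrow> P g \<in> S1"
  using sk unfolding skeleton_def E1_def by auto

lemma sw:
  assumes "g \<in> Gam X (Suc (Suc j))"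
  shows "P (gc g) \<cdot> P (gl g) \<cdot> P g = P g" "P g \<cdot> P (gr g) \<cdot> P (gc g) = P g"
    "P (gr g) \<cdot> P (gc g) \<cdot> P g \<cdot> P (gc g) \<cdot> P (gl g) = P (gr g) \<cdot> P (gc g) \<cdot> P (gc g) \<cdot> P (gl g)"
proof -
  have "P g \<in> sandwich (P (gr g) \<cdot> P (gc g)) (P (gc g) \<cdot> P (gl g))"
    using sk assms unfolding skeleton_def by (metis le_add1 add_2_eq_Suc)
  then show "P (gc g) \<cdot> P (gl g) \<cdot> P g = P g" "P g \<cdot> P (gr g) \<cdot> P (gc g) = P g"
    "P (gr g) \<cdot> P (gc g) \<cdot> P g \<cdot> P (gc g) \<cdot> P (gl g) = P (gr g) \<cdot> P (gc g) \<cdot> P (gc g) \<cdot> P (gl g)"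
    unfolding sandwich_def by (auto simp: mult1_assoc)
qed

lemma ctx: "a \<cdot> b = c \<Longrightarrow> a \<cdot> (b \<cdot> x) = c \<cdot> x"
  by (metis mult1_assoc)

lemma ident: "g \<in> Gam X i \<Longrightarrow> P One \<cdot> P g = P g \<and> P g \<cdot> P One = P g"
proof (induction i arbitrary: g rule: less_induct)
  case (less i)
  consider "i = 0" | "i = Suc 0" | j where "i = Suc (Suc j)" by (metis not0_implies_Suc)
  then show ?case
  proof cases
    case 1
    then show ?thesis using less.prems idem[OF GamAll_I, of One 0] by auto
  next
    case 2
    then show ?thesis using less.prems sk unfolding skeleton_def by auto
  next
    case 3
    have gS: "g \<in> Gam X (Suc (Suc j))" using 3 less.prems by simp
    note sws = sw[OF gS]
    have c: "gc g \<in> Gam X j" using gS by auto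
    have h1: "P One \<cdot> P (gc g) = P (gc g)" "P (gc g) \<cdot> P One = P (gc g)"
      using less.IH[of j "gc g"] c 3 by auto
    have "P One \<cdot> P g = P One \<cdot> (P (gc g) \<cdot> P (gl g) \<cdot> P g)" using sws(1) by simp
    also have "\<dots> = (P One \<cdot> P (gc g)) \<cdot> P (gl g) \<cdot> P g" by (simp only: mult1_assoc)
    also have "\<dots> = P g" using h1(1) sws(1) by simp
    finally have a: "P One \<cdot> P g = P g" .
    have "P g \<cdot> P One = (P g \<cdot> P (gr g) \<cdot> P (gc g)) \<cdot> P One" using sws(2) by simp
    also have "\<dots> = P g \<cdot> P (gr g) \<cdot> (P (gc g) \<cdot> P One)" by (simp only: mult1_assoc)
    also have "\<dots> = P g" using h1(2) sws(2) by simp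
    finally show ?thesis using a by simp
  qed
qed

lemma identA: "g \<in> GamAll X \<Longrightarrow> P One \<cdot> P g = P g \<and> P g \<cdot> P One = P g"
  unfolding GamAll_def using ident by blast

lemma idem': "g \<in> GamAll X \<Longrightarrow> P g \<cdot> (P g \<cdot> x) = P g \<cdot> x"
  using idem ctx by blast

lemma cg:
  assumes "g \<in> Gam X (Suc (Suc j))"
  shows "P (gc g) \<cdot> P g = P g" "P g \<cdot> P (gc g) = P g"
proof -
  have c: "gc g \<in> GamAll X" using assms GamAll_I by force
  note sws = sw[OF assms]
  have "P (gc g) \<cdot> P g = P (gc g) \<cdot> (P (gc g) \<cdot> P (gl g) \<cdot> P g)" using sws(1) by simp
  also have "\<dots> = (P (gc g) \<cdot> P (gc g)) \<cdot> P (gl g) \<cdot> P g" by (simp only: mult1_assoc)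
  also have "\<dots> = P g" using sws(1) idem[OF c] by simp
  finally show "P (gc g) \<cdot> P g = P g" .
  have "P g \<cdot> P (gc g) = (P g \<cdot> P (gr g) \<cdot> P (gc g)) \<cdot> P (gc g)" using sws(2) by simp
  also have "\<dots> = P g \<cdot> P (gr g) \<cdot> (P (gc g) \<cdot> P (gc g))" by (simp only: mult1_assoc)
  also have "\<dots> = P g" using sws(2) idem[OF c] by simp
  finally show "P g \<cdot> P (gc g) = P g" .
qed

lemma valley:
  assumes "g \<in> Gam X (Suc (Suc j))"
  shows "P (gr g) \<cdot> P g \<cdot> P (gl g) = P (gr g) \<cdot> P (gc g) \<cdot> P (gl g)"
proof -
  have c: "gc g \<in> GamAll X" using assms GamAll_I by force
  note sws = sw[OF assms]
  have "P (gr g) \<cdot> P (gc g) \<cdot> P (gl g) = P (gr g) \<cdot> P (gc g) \<cdot> P (gc g) \<cdot> P (gl g)"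
    using idem[OF c] by (simp add: mult1_assoc)
  also have "\<dots> = P (gr g) \<cdot> P (gc g) \<cdot> P g \<cdot> P (gc g) \<cdot> P (gl g)" using sws(3) by simp
  also have "\<dots> = P (gr g) \<cdot> P g \<cdot> P (gl g)" using cg[OF assms] by (simp add: mult1_assoc)
  finally show ?thesis by simp
qed

lemma collapse: "p \<in> Gam X (Suc j) \<Longrightarrow> d = gl p \<or> d = gr p \<Longrightarrow> P p \<cdot> P d \<cdot> P p = P p"
proof (induction j arbitrary: p d rule: less_induct)
  case (less j)
  show ?case
  proof (cases j)
    case 0
    then obtain x where x: "x \<in> X" "p = Gen x" using less.prems by auto
    then have "d = One" using less.prems by auto
    then show ?thesis using x identA[of p] idem[of p] GamAll_I less.prems by metis
  next
    case (Suc k)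
    then have pS: "p \<in> Gam X (Suc (Suc k))" using less.prems by simp
    obtain l c r where lcr: "p = Tr l c r" "l \<in> Gam X (Suc k)" "c \<in> Gam X k"
      "r \<in> Gam X (Suc k)" "l \<noteq> r" "(c = gl l \<or> c = gr l)" "(c = gl r \<or> c = gr r)"
      using Gam_SS[OF pS] by blast
    have IHl: "P l \<cdot> P c \<cdot> P l = P l" using less.IH[of k l c] lcr Suc by simp
    have IHr: "P r \<cdot> P c \<cdot> P r = P r" using less.IH[of k r c] lcr Suc by simp
    note sws = sw[OF pS, unfolded lcr gl.simps gc.simps gr.simps]
    have cA: "c \<in> GamAll X" using lcr GamAll_I by blast
    have key: "P p \<cdot> P r \<cdot> P c \<cdot> P l \<cdot> P p = P p"
    proof -
      have "P p \<cdot> P r \<cdot> P c \<cdot> P l \<cdot> P p = P p \<cdot> (P r \<cdot> P c \<cdot> P c \<cdot> P l) \<cdot> P p"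
        using idem[OF cA] by (simp add: mult1_assoc)
      also have "\<dots> = P p \<cdot> (P r \<cdot> P c \<cdot> P p \<cdot> P c \<cdot> P l) \<cdot> P p" using sws(3) lcr(1) by simp
      also have "\<dots> = (P p \<cdot> P r \<cdot> P c) \<cdot> P p \<cdot> (P c \<cdot> P l \<cdot> P p)" by (simp add: mult1_assoc)
      also have "\<dots> = P p" using sws(1,2) lcr(1) idem[OF GamAll_I[OF pS]] by simp
      finally show ?thesis .
    qed
    show ?thesis
    proof (cases "d = l")
      case True
      have "P p \<cdot> P d \<cdot> P p = (P p \<cdot> P r \<cdot> P c) \<cdot> P l \<cdot> (P c \<cdot> P l \<cdot> P p)"
        using sws(1,2) lcr(1) True by simp
      also have "\<dots> = P p \<cdot> P r \<cdot> P c \<cdot> (P l \<cdot> P c \<cdot> P l) \<cdot> P p" by (simp add: mult1_assoc)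
      also have "\<dots> = P p" using IHl key by simp
      finally show ?thesis .
    next
      case False
      then have dr: "d = r" using less.prems lcr by auto
      have "P p \<cdot> P d \<cdot> P p = (P p \<cdot> P r \<cdot> P c) \<cdot> P r \<cdot> (P c \<cdot> P l \<cdot> P p)"
        using sws(1,2) lcr(1) dr by simp
      also have "\<dots> = P p \<cdot> (P r \<cdot> P c \<cdot> P r) \<cdot> P c \<cdot> P l \<cdot> P p" by (simp add: mult1_assoc)
      also have "\<dots> = P p" using IHr key by simp
      finally show ?thesis .
    qed
  qed
qed


lemma ctx2: "a \<cdot> b = c \<Longrightarrow> (x \<cdot> a) \<cdot> b = x \<cdot> c"
  by (metis mult1_assoc)

lemma pr_snoc: "pr P (xs @ [x]) = pr P xs \<cdot> P x"
  by (simp add: pr_append)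

lemma desc_inv: "p \<in> GamAll X \<Longrightarrow> successively (dn X) (p # D) \<Longrightarrow> pr P (p # D) \<cdot> pr P (rev (p # D)) = P p"
proof (induction D arbitrary: p)
  case Nil
  then show ?case using idem by simp
next
  case (Cons d D)
  have dpd: "dn X p d" and sD: "successively (dn X) (d # D)" using Cons.prems by auto
  have dA: "d \<in> GamAll X" using dn_GamAll[OF dpd] by blast
  have IH: "pr P (d # D) \<cdot> pr P (rev (d # D)) = P d" using Cons.IH[OF dA sD] .
  obtain j where j: "p \<in> Gam X (Suc j)" "d = gl p \<or> d = gr p" using dpd unfolding dn_def by blast
  have "pr P (p # d # D) \<cdot> pr P (rev (p # d # D)) = P p \<cdot> (pr P (d # D) \<cdot> pr P (rev (d # D))) \<cdot> P p"
    by (simp only: rev.simps pr_snoc pr.simps(2)[of P p "d # D"] mult1_assoc)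
  also have "\<dots> = P p" using IH collapse[OF j] by simp
  finally show ?case .
qed

lemma mountain_inv:
  assumes "mountain X m" "set m \<subseteq> GamAll X"
  shows "pr P m \<cdot> pr P (rev m) \<cdot> pr P m = pr P m"
proof -
  obtain A D where AD: "m = A @ D" "A \<noteq> []" "successively (\<lambda>a b. dn X b a) A"
      "successively (dn X) (last A # D)" using assms(1) unfolding mountain_def by blast
  define p where "p = last A"
  define A0 where "A0 = butlast A"
  have A: "A = A0 @ [p]" using AD(2) unfolding p_def A0_def by simp
  have pA: "p \<in> GamAll X" using assms(2) AD A by auto
  have d1: "P p \<cdot> pr P D \<cdot> (pr P (rev D) \<cdot> P p) = P p"
    using desc_inv[OF pA AD(4)[folded p_def]] by (simp add: pr_snoc)
  have r: "p # rev A0 = rev (A0 @ [p])" by simp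
  have s2: "successively (dn X) (p # rev A0)" unfolding r successively_rev using AD(3) A by simp
  have d2: "P p \<cdot> pr P (rev A0) \<cdot> (pr P A0 \<cdot> P p) = P p"
    using desc_inv[OF pA s2] by (simp add: pr_snoc)
  have d1': "\<And>x. P p \<cdot> (pr P D \<cdot> (pr P (rev D) \<cdot> (P p \<cdot> x))) = P p \<cdot> x"
    using ctx[OF d1] by (simp add: mult1_assoc)
  have d2': "\<And>x. P p \<cdot> (pr P (rev A0) \<cdot> (pr P A0 \<cdot> (P p \<cdot> x))) = P p \<cdot> x"
    using ctx[OF d2] by (simp add: mult1_assoc)
  have "pr P m \<cdot> pr P (rev m) \<cdot> pr P m =
     pr P A0 \<cdot> (P p \<cdot> (pr P D \<cdot> (pr P (rev D) \<cdot> (P p \<cdot> (pr P (rev A0) \<cdot> (pr P A0 \<cdot> (P p \<cdot> pr P D)))))))"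
    by (simp add: AD(1) A pr_append mult1_assoc)
  also have "\<dots> = pr P A0 \<cdot> (P p \<cdot> pr P D)" by (simp only: d1' d2')
  also have "\<dots> = pr P m" by (simp add: AD(1) A pr_append mult1_assoc)
  finally show ?thesis .
qed


lemma pr_last: "m \<noteq> [] \<Longrightarrow> pr P m = pr P (butlast m) \<cdot> P (last m)"
  by (metis append_butlast_last_id pr_snoc)

lemma mountain_snoc_up:
  "mountain X m \<Longrightarrow> set m \<subseteq> GamAll X \<Longrightarrow> dn X v (last m) \<Longrightarrow>
   \<exists>m'. mountain X m' \<and> set m' \<subseteq> GamAll X \<and> pr P m' = pr P m \<cdot> P v \<and> last m' = v"
proof (induction "length m" arbitrary: m v rule: less_induct)
  case less
  obtain A D where AD: "m = A @ D" "A \<noteq> []" "successively (\<lambda>a b. dn X b a) A"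
      "successively (dn X) (last A # D)" using less.prems(1) unfolding mountain_def by blast
  have vA: "v \<in> GamAll X" using dn_GamAll[OF less.prems(3)] by blast
  show ?case
  proof (cases "D = []")
    case True
    have lm: "last m = last A" using AD True by simp
    have "successively (\<lambda>a b. dn X b a) (A @ [v])"
      using AD(3) less.prems(3) lm AD(2) by (simp only: successively_append_iff) auto
    then have "mountain X (m @ [v])" unfolding mountain_def using True AD
      by (intro exI[of _ "A @ [v]"] exI[of _ "[]"]) auto
    then show ?thesis using less.prems(2) vA by (intro exI[of _ "m @ [v]"]) (auto simp: pr_snoc)
  next
    case False
    define e where "e = last D"
    define D0 where "D0 = butlast D"
    have D: "D = D0 @ [e]" using False unfolding e_def D0_def by simp
    define m0 where "m0 = A @ D0"
    have m: "m = m0 @ [e]" using AD(1) D m0_def by simp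
    have em: "e = last m" using m by simp
    define q where "q = last m0"
    have q: "q = last (last A # D0)" unfolding q_def m0_def using AD(2) by (cases D0) auto
    have sD: "successively (dn X) ((last A # D0) @ [e])" using AD(4) D by simp
    then have dqe: "dn X q e" and sD0: "successively (dn X) (last A # D0)"
      using q by (simp_all only: successively_append_iff) auto
    have mm0: "mountain X m0" unfolding mountain_def m0_def using AD(2,3) sD0 by blast
    have m0ne: "m0 \<noteq> []" using AD(2) m0_def by simp
    have setm0: "set m0 \<subseteq> GamAll X" using less.prems(2) m by auto
    have len: "length m0 < length m" using m by simp
    have prm: "pr P m = pr P (butlast m0) \<cdot> P q \<cdot> P e"
      using pr_last[OF m0ne] m q_def by (simp add: pr_snoc)
    obtain j where j: "q \<in> Gam X (Suc j)" "e \<in> Gam X j" "e = gl q \<or> e = gr q" using dqe unfolding dn_def by blast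
    obtain j' where j': "v \<in> Gam X (Suc j')" "e \<in> Gam X j'" "e = gl v \<or> e = gr v"
      using less.prems(3) em unfolding dn_def by blast
    have jj: "j' = j" using Gam_unique j(2) j'(2) by blast
    show ?thesis
    proof (cases "q = v")
      case True
      have "pr P m \<cdot> P v = pr P (butlast m0) \<cdot> (P q \<cdot> P e \<cdot> P q)" using prm True by (simp add: mult1_assoc)
      also have "\<dots> = pr P m0" using collapse[OF j(1,3)] pr_last[OF m0ne] q_def by simp
      finally show ?thesis using mm0 setm0 True q_def by auto
    next
      case False
      define g where "g = Tr v e q"
      have gS: "g \<in> Gam X (Suc (Suc j))" unfolding g_def
        using Gam_SS_intro[of v X j e q] j j' jj False by auto
      have dgq: "dn X g q" unfolding dn_def using gS j(1) g_def by (intro exI[of _ "Suc j"]) auto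
      obtain m1 where m1: "mountain X m1" "set m1 \<subseteq> GamAll X" "pr P m1 = pr P m0 \<cdot> P g" "last m1 = g"
        using less.hyps[OF len mm0 setm0, of g] dgq q_def by auto
      have dgv: "dn X g v" unfolding dn_def using gS j'(1) jj g_def by (intro exI[of _ "Suc j"]) auto
      have mt: "mountain X (m1 @ [v])" using mountain_snoc_dn[OF m1(1)] dgv m1(4) by simp
      have val: "P q \<cdot> P g \<cdot> P v = P q \<cdot> P e \<cdot> P v" using valley[OF gS] g_def by simp
      have "pr P (m1 @ [v]) = pr P (butlast m0) \<cdot> (P q \<cdot> P g \<cdot> P v)"
        using m1(3) pr_last[OF m0ne] q_def by (simp add: pr_snoc mult1_assoc)
      also have "\<dots> = pr P m \<cdot> P v" using val prm by (simp add: mult1_assoc)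
      finally show ?thesis using mt m1(2) vA by (intro exI[of _ "m1 @ [v]"]) auto
    qed
  qed
qed


lemma mountain_walk:
  "mountain X m \<Longrightarrow> set m \<subseteq> GamAll X \<Longrightarrow> successively (adj X) (last m # w) \<Longrightarrow>
   \<exists>m'. mountain X m' \<and> set m' \<subseteq> GamAll X \<and> pr P m' = pr P m \<cdot> pr P w \<and> last m' = last (last m # w)"
proof (induction w arbitrary: m)
  case Nil
  then show ?case by auto
next
  case (Cons v w)
  have a: "adj X (last m) v" and sw: "successively (adj X) (v # w)" using Cons.prems(3) by auto
  obtain m1 where m1: "mountain X m1" "set m1 \<subseteq> GamAll X" "pr P m1 = pr P m \<cdot> P v" "last m1 = v"
  proof (cases "dn X (last m) v")
    case True
    then show ?thesis using that[of "m @ [v]"] mountain_snoc_dn[OF Cons.prems(1) True] Cons.prems(2)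
        dn_GamAll[OF True] by (auto simp: pr_snoc)
  next
    case False
    then have "dn X v (last m)" using a unfolding adj_def by blast
    then show ?thesis using that mountain_snoc_up[OF Cons.prems(1,2)] by blast
  qed
  obtain m' where "mountain X m'" "set m' \<subseteq> GamAll X" "pr P m' = pr P m1 \<cdot> pr P w" "last m' = last (last m1 # w)"
    using Cons.IH[OF m1(1,2)] sw m1(4) by blast
  then show ?case using m1 by (intro exI[of _ m']) (auto simp: mult1_assoc)
qed

lemma updown: "g \<in> Gam X i \<Longrightarrow>
   (\<exists>w. w \<noteq> [] \<and> hd w = One \<and> last w = g \<and> successively (\<lambda>a b. dn X b a) w \<and> set w \<subseteq> GamAll X \<and> pr P w = P g)
 \<and> (\<exists>w. w \<noteq> [] \<and> hd w = g \<and> last w = One \<and> successively (dn X) w \<and> set w \<subseteq> GamAll X \<and> pr P w = P g)"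
proof (induction i arbitrary: g rule: less_induct)
  case (less i)
  have gA: "g \<in> GamAll X" using GamAll_I[OF less.prems] .
  consider "i = 0" | "i = Suc 0" | j where "i = Suc (Suc j)" by (metis not0_implies_Suc)
  then show ?case
  proof cases
    case 1
    then have "g = One" using less.prems by simp
    then show ?thesis using One_GamAll[of X] by (intro conjI exI[of _ "[One]"]) auto
  next
    case 2
    then have d: "dn X g One" using less.prems unfolding dn_def by (intro exI[of _ 0]) auto
    have i: "P One \<cdot> P g = P g" "P g \<cdot> P One = P g" using identA[OF gA] by auto
    show ?thesis
    proof (rule conjI)
      show "\<exists>w. w \<noteq> [] \<and> hd w = One \<and> last w = g \<and> successively (\<lambda>a b. dn X b a) w \<and> set w \<subseteq> GamAll X \<and> pr P w = P g"
        using d i gA One_GamAll[of X] by (intro exI[of _ "[One, g]"]) auto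
      show "\<exists>w. w \<noteq> [] \<and> hd w = g \<and> last w = One \<and> successively (dn X) w \<and> set w \<subseteq> GamAll X \<and> pr P w = P g"
        using d i gA One_GamAll[of X] by (intro exI[of _ "[g, One]"]) auto
    qed
  next
    case 3
    have gS: "g \<in> Gam X (Suc (Suc j))" using 3 less.prems by simp
    then obtain l c r where lcr: "g = Tr l c r" "l \<in> Gam X (Suc j)" "c \<in> Gam X j"
      "r \<in> Gam X (Suc j)" "l \<noteq> r" "(c = gl l \<or> c = gr l)" "(c = gl r \<or> c = gr r)"
      using Gam_SS by blast
    note sws = sw[OF gS, unfolded lcr(1) gl.simps gc.simps gr.simps]
    obtain wu where wu: "wu \<noteq> []" "hd wu = One" "last wu = c" "successively (\<lambda>a b. dn X b a) wu"
      "set wu \<subseteq> GamAll X" "pr P wu = P c" using less.IH[of j c] lcr(3) 3 by auto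
    obtain wd where wd: "wd \<noteq> []" "hd wd = c" "last wd = One" "successively (dn X) wd"
      "set wd \<subseteq> GamAll X" "pr P wd = P c" using less.IH[of j c] lcr(3) 3 by auto
    have dlc: "dn X l c" unfolding dn_def using lcr by (intro exI[of _ j]) auto
    have drc: "dn X r c" unfolding dn_def using lcr by (intro exI[of _ j]) auto
    have dgl: "dn X g l" unfolding dn_def using lcr gS by (intro exI[of _ "Suc j"]) auto
    have dgr: "dn X g r" unfolding dn_def using lcr gS by (intro exI[of _ "Suc j"]) auto
    have A1: "successively (\<lambda>a b. dn X b a) (wu @ [l, g])"
      using wu(1,3,4) dlc dgl by (simp add: successively_append_iff)
    have A2: "successively (dn X) ([g, r] @ wd)"
      using wd(1,2,4) drc dgr by (cases wd) (auto simp: successively_append_iff)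
    have l: "l \<in> GamAll X" "r \<in> GamAll X" using lcr GamAll_I by blast+
    have p1: "pr P (wu @ [l, g]) = P g" using sws(1) wu(6) lcr(1) by (simp add: pr_append mult1_assoc)
    have p2: "pr P ([g, r] @ wd) = P g" using sws(2) wd(6) lcr(1) by (simp add: pr_append mult1_assoc)
    show ?thesis
    proof (rule conjI)
      show "\<exists>w. w \<noteq> [] \<and> hd w = One \<and> last w = g \<and> successively (\<lambda>a b. dn X b a) w \<and> set w \<subseteq> GamAll X \<and> pr P w = P g"
        using A1 p1 wu gA l by (intro exI[of _ "wu @ [l, g]"]) auto
      show "\<exists>w. w \<noteq> [] \<and> hd w = g \<and> last w = One \<and> successively (dn X) w \<and> set w \<subseteq> GamAll X \<and> pr P w = P g"
        using A2 p2 wd gA l by (intro exI[of _ "[g, r] @ wd"]) auto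
    qed
  qed
qed


lemma word_mountain: "set u \<subseteq> GamAll X \<Longrightarrow>
  \<exists>m. mountain X m \<and> set m \<subseteq> GamAll X \<and> last m = One \<and> pr P m = P One \<cdot> pr P u"
proof (induction u rule: rev_induct)
  case Nil
  have "mountain X [One]" unfolding mountain_def by (intro exI[of _ "[One]"] exI[of _ "[]"]) auto
  then show ?case using One_GamAll[of X] by (intro exI[of _ "[One]"]) auto
next
  case (snoc g u)
  obtain m where m: "mountain X m" "set m \<subseteq> GamAll X" "last m = One" "pr P m = P One \<cdot> pr P u"
    using snoc by auto
  have gA: "g \<in> GamAll X" using snoc.prems by auto
  then obtain i where gi: "g \<in> Gam X i" unfolding GamAll_def by auto
  obtain wu where wu: "wu \<noteq> []" "hd wu = One" "last wu = g" "successively (\<lambda>a b. dn X b a) wu"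
      "set wu \<subseteq> GamAll X" "pr P wu = P g" using updown[OF gi] by blast
  obtain wd where wd: "wd \<noteq> []" "hd wd = g" "last wd = One" "successively (dn X) wd"
      "set wd \<subseteq> GamAll X" "pr P wd = P g" using updown[OF gi] by blast
  have wu': "wu = One # tl wu" using wu(1,2) by (cases wu) auto
  have wd': "wd = g # tl wd" using wd(1,2) by (cases wd) auto
  have s1: "successively (adj X) (last m # tl wu)" using wu(4) m(3) wu'
    by (metis adj_def successively_mono)
  obtain m1 where m1: "mountain X m1" "set m1 \<subseteq> GamAll X" "pr P m1 = pr P m \<cdot> pr P (tl wu)"
     "last m1 = last (last m # tl wu)" using mountain_walk[OF m(1,2) s1] by blast
  have lm1: "last m1 = g" using m1(4) m(3) wu' wu(3) by metis
  have s2: "successively (adj X) (last m1 # tl wd)" using wd(4) lm1 wd'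
    by (metis adj_def successively_mono)
  obtain m2 where m2: "mountain X m2" "set m2 \<subseteq> GamAll X" "pr P m2 = pr P m1 \<cdot> pr P (tl wd)"
     "last m2 = last (last m1 # tl wd)" using mountain_walk[OF m1(1,2) s2] by blast
  have lm2: "last m2 = One" using m2(4) lm1 wd' wd(3) by metis
  have mne: "m \<noteq> []" using mountain_nonempty[OF m(1)] .
  have pm: "pr P m \<cdot> P One = pr P m"
    using pr_last[OF mne] m(3) idem[OF One_GamAll] by (simp add: mult1_assoc)
  have pu: "P One \<cdot> pr P (tl wu) = P g" using wu(6) wu' by (metis pr.simps(2))
  have pd: "P g \<cdot> pr P (tl wd) = P g" using wd(6) wd' by (metis pr.simps(2))
  have "pr P m2 = (pr P m \<cdot> P One) \<cdot> pr P (tl wu) \<cdot> pr P (tl wd)" using m2(3) m1(3) pm by simp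
  also have "\<dots> = pr P m \<cdot> (P g \<cdot> pr P (tl wd))" using pu by (simp add: mult1_assoc)
  also have "\<dots> = P One \<cdot> pr P (u @ [g])" using pd m(4) by (simp add: pr_snoc mult1_assoc)
  finally show ?case using m2(1,2) lm2 by blast
qed

lemma pr_sgen: "w \<noteq> [] \<Longrightarrow> set w \<subseteq> GamAll X \<Longrightarrow> pr P w \<in> sgen (P ` GamAll X)"
proof (induction w)
  case Nil then show ?case by simp
next
  case (Cons g w)
  show ?case
  proof (cases "w = []")
    case True then show ?thesis using Cons.prems by (auto intro: sgen.base)
  next
    case False
    then have "pr P w \<in> sgen (P ` GamAll X)" using Cons by auto
    moreover have "P g \<in> sgen (P ` GamAll X)" using Cons.prems by (auto intro: sgen.base)
    ultimately show ?thesis by (simp add: sgen.mult)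
  qed
qed

lemma sgen_pr: "a \<in> sgen (P ` GamAll X) \<Longrightarrow> \<exists>u. u \<noteq> [] \<and> set u \<subseteq> GamAll X \<and> a = pr P u"
proof (induction rule: sgen.induct)
  case (base a)
  then obtain g where "g \<in> GamAll X" "a = P g" by auto
  then show ?case by (intro exI[of _ "[g]"]) auto
next
  case (mult a b)
  then obtain u v where "u \<noteq> []" "set u \<subseteq> GamAll X" "a = pr P u" "v \<noteq> []" "set v \<subseteq> GamAll X" "b = pr P v"
    by blast
  then show ?case by (intro exI[of _ "u @ v"]) (auto simp: pr_append)
qed

lemma pr_One: "u \<noteq> [] \<Longrightarrow> set u \<subseteq> GamAll X \<Longrightarrow> P One \<cdot> pr P u = pr P u \<and> pr P u \<cdot> P One = pr P u"
proof (induction u)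
  case Nil then show ?case by simp
next
  case (Cons g u)
  have g: "P One \<cdot> P g = P g" "P g \<cdot> P One = P g" using identA Cons.prems by auto
  show ?case
  proof (cases "u = []")
    case True then show ?thesis using g by simp
  next
    case False
    then have "pr P u \<cdot> P One = pr P u" using Cons by auto
    then show ?thesis using g by (simp add: mult1_assoc flip: mult1_assoc[of "P One"])
  qed
qed

lemma regular:
  "regular_monoid_with_id (sgen (P ` GamAll X)) (P One)"
  unfolding regular_monoid_with_id_def
proof (intro conjI ballI)
  show "\<And>a b. a \<in> sgen (P ` GamAll X) \<Longrightarrow> b \<in> sgen (P ` GamAll X) \<Longrightarrow> a \<cdot> b \<in> sgen (P ` GamAll X)"
    by (rule sgen.mult)
  show "P One \<in> sgen (P ` GamAll X)" using One_GamAll by (auto intro: sgen.base)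
  fix a assume a: "a \<in> sgen (P ` GamAll X)"
  then obtain u where u: "u \<noteq> []" "set u \<subseteq> GamAll X" "a = pr P u" using sgen_pr by blast
  show "P One \<cdot> a = a" "a \<cdot> P One = a" using pr_One[OF u(1,2)] u(3) by auto
  obtain m where m: "mountain X m" "set m \<subseteq> GamAll X" "pr P m = P One \<cdot> pr P u"
    using word_mountain[OF u(2)] by blast
  have am: "a = pr P m" using m(3) pr_One[OF u(1,2)] u(3) by simp
  have "pr P (rev m) \<in> sgen (P ` GamAll X)"
    using pr_sgen[of "rev m"] mountain_nonempty[OF m(1)] m(2) by auto
  then show "\<exists>b\<in>sgen (P ` GamAll X). a \<cdot> b \<cdot> a = a"
    using mountain_inv[OF m(1,2)] am by blast
qed


lemma rho_pr: "rho X u v \<Longrightarrow> pr P u = pr P v"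
proof (induction rule: rho.induct)
  case (gen1 g) then show ?case using identA by simp
next
  case (gen2 g) then show ?case using identA by simp
next
  case (gen3 g) then show ?case using idem by simp
next
  case (gen4 i g)
  then obtain j where "i = Suc (Suc j)" by (metis add_2_eq_Suc le_iff_add)
  then show ?case using sw(1)[of g j] gen4 by (simp add: mult1_assoc)
next
  case (gen5 i g)
  then obtain j where "i = Suc (Suc j)" by (metis add_2_eq_Suc le_iff_add)
  then show ?case using sw(2)[of g j] gen5 by (simp add: mult1_assoc)
next
  case (gen6 i g)
  then obtain j where j: "i = Suc (Suc j)" by (metis add_2_eq_Suc le_iff_add)
  then have gS: "g \<in> Gam X (Suc (Suc j))" using gen6 by simp
  have c: "gc g \<in> GamAll X" using gS GamAll_I by force
  have "pr P [gr g, gc g, g, gc g, gl g] = P (gr g) \<cdot> P (gc g) \<cdot> P g \<cdot> P (gc g) \<cdot> P (gl g)"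
    by (simp add: mult1_assoc)
  also have "\<dots> = P (gr g) \<cdot> P (gc g) \<cdot> P (gc g) \<cdot> P (gl g)" using sw(3)[OF gS] .
  also have "\<dots> = P (gr g) \<cdot> (P (gc g) \<cdot> P (gc g)) \<cdot> P (gl g)" by (simp add: mult1_assoc)
  also have "\<dots> = pr P [gr g, gc g, gl g]" using idem[OF c] by (simp add: mult1_assoc)
  finally show ?case .
next
  case (cong_left u v w) then show ?case by (simp add: pr_append)
next
  case (cong_right u v w) then show ?case by (simp add: pr_append)
qed auto

lemma pr_S1: "u \<noteq> [] \<Longrightarrow> set u \<subseteq> GamAll X \<Longrightarrow> pr P u \<in> S1"
proof (induction u)
  case Nil then show ?case by simp
next
  case (Cons g u)
  then show ?case using inS1 S1_mult by (cases "u = []") auto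
qed

end

lemma rho_GPlus: "rho X u v \<Longrightarrow> u \<in> GPlus X \<and> v \<in> GPlus X"
proof (induction rule: rho.induct)
  case (gen4 i g)
  then obtain j where "i = Suc (Suc j)" by (metis add_2_eq_Suc le_iff_add)
  then show ?case using gen4 GamAll_I[of g X i] GamAll_I[of "gc g" X j] GamAll_I[of "gl g" X "Suc j"]
    unfolding GPlus_def by auto
next
  case (gen5 i g)
  then obtain j where "i = Suc (Suc j)" by (metis add_2_eq_Suc le_iff_add)
  then show ?case using gen5 GamAll_I[of g X i] GamAll_I[of "gc g" X j] GamAll_I[of "gr g" X "Suc j"]
    unfolding GPlus_def by auto
next
  case (gen6 i g)
  then obtain j where "i = Suc (Suc j)" by (metis add_2_eq_Suc le_iff_add)
  then show ?case using gen6 GamAll_I[of g X i] GamAll_I[of "gc g" X j] GamAll_I[of "gr g" X "Suc j"]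
     GamAll_I[of "gl g" X "Suc j"]
    unfolding GPlus_def by auto
qed (auto simp: GPlus_def One_GamAll)

theorem proposition5p1:
  fixes X :: "'x set" and \<phi> :: "'x gam \<Rightarrow> 'a::semigroup_mult option"
  assumes "X \<noteq> {}" and "skeleton X \<phi>"
  shows "\<exists>\<psi>. ft_hom X \<psi> \<and> (\<forall>g \<in> GamAll X. \<psi> (rho_class X [g]) = \<phi> g)
           \<and> (\<forall>\<psi>'. ft_hom X \<psi>' \<and> (\<forall>g \<in> GamAll X. \<psi>' (rho_class X [g]) = \<phi> g)
                   \<longrightarrow> (\<forall>c \<in> FT X. \<psi>' c = \<psi> c))
           \<and> sgen (\<phi> ` GamAll X) = \<psi> ` FT X
           \<and> regular_monoid_with_id (sgen (\<phi> ` GamAll X)) (\<phi> One)"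
proof -
  note sk = assms(2)
  define \<psi> where "\<psi> c = pr \<phi> (SOME u. u \<in> GPlus X \<and> c = rho_class X u)" for c
  have psi: "\<psi> (rho_class X u) = pr \<phi> u" if u: "u \<in> GPlus X" for u
  proof -
    have "\<exists>u'. u' \<in> GPlus X \<and> rho_class X u = rho_class X u'" using u by blast
    then have "(SOME u'. u' \<in> GPlus X \<and> rho_class X u = rho_class X u') \<in> GPlus X \<and>
       rho_class X u = rho_class X (SOME u'. u' \<in> GPlus X \<and> rho_class X u = rho_class X u')"
      by (rule someI_ex)
    then obtain u' where u': "u' \<in> GPlus X" "rho_class X u = rho_class X u'"
      "(SOME u'. u' \<in> GPlus X \<and> rho_class X u = rho_class X u') = u'" by blast
    have "rho X u u" using u by (rule rho.refl)
    then have "u \<in> rho_class X u'" using u'(2) unfolding rho_class_def by auto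
    then have "rho X u' u" unfolding rho_class_def by auto
    then have "pr \<phi> u' = pr \<phi> u" using rho_pr[OF sk] by blast
    then show ?thesis unfolding \<psi>_def using u'(3) by simp
  qed
  have GP: "u \<in> GPlus X \<longleftrightarrow> u \<noteq> [] \<and> set u \<subseteq> GamAll X" for u unfolding GPlus_def by auto
  have hom: "ft_hom X \<psi>"
    unfolding ft_hom_def
  proof (intro conjI ballI)
    fix c assume "c \<in> FT X"
    then obtain u where u: "u \<in> GPlus X" "c = rho_class X u" unfolding FT_def by auto
    then show "\<psi> c \<in> S1" using psi pr_S1[OF sk] GP by auto
  next
    fix u v assume uv: "u \<in> GPlus X" "v \<in> GPlus X"
    then have "u @ v \<in> GPlus X" unfolding GPlus_def by auto
    then show "\<psi> (rho_class X (u @ v)) = \<psi> (rho_class X u) \<cdot> \<psi> (rho_class X v)"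
      using psi uv by (simp add: pr_append)
  qed
  have gen: "\<forall>g \<in> GamAll X. \<psi> (rho_class X [g]) = \<phi> g"
    using psi GP by auto
  have uniq: "\<forall>c \<in> FT X. \<psi>' c = \<psi> c"
    if h: "ft_hom X \<psi>'" "\<forall>g \<in> GamAll X. \<psi>' (rho_class X [g]) = \<phi> g" for \<psi>'
  proof
    fix c assume "c \<in> FT X"
    then obtain u where u: "u \<in> GPlus X" "c = rho_class X u" unfolding FT_def by auto
    have "\<psi>' (rho_class X u) = pr \<phi> u" if "u \<noteq> []" "set u \<subseteq> GamAll X" for u
      using that
    proof (induction u)
      case Nil then show ?case by simp
    next
      case (Cons g u)
      show ?case
      proof (cases "u = []")
        case True then show ?thesis using h(2) Cons.prems by simp
      next
        case False
        have "\<psi>' (rho_class X ([g] @ u)) = \<psi>' (rho_class X [g]) \<cdot> \<psi>' (rho_class X u)"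
        proof -
          have "[g] \<in> GPlus X" "u \<in> GPlus X" using Cons.prems False unfolding GPlus_def by auto
          then show ?thesis using h(1) unfolding ft_hom_def by blast
        qed
        then show ?thesis using Cons False h(2) by simp
      qed
    qed
    then show "\<psi>' c = \<psi> c" using u psi GP by auto
  qed
  have sg: "sgen (\<phi> ` GamAll X) = \<psi> ` FT X"
  proof
    show "sgen (\<phi> ` GamAll X) \<subseteq> \<psi> ` FT X"
    proof
      fix a assume "a \<in> sgen (\<phi> ` GamAll X)"
      then obtain u where u: "u \<noteq> []" "set u \<subseteq> GamAll X" "a = pr \<phi> u" using sgen_pr[OF sk] by blast
      then have "u \<in> GPlus X" using GP by auto
      then have "rho_class X u \<in> FT X" "\<psi> (rho_class X u) = a" using u psi unfolding FT_def by auto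
      then show "a \<in> \<psi> ` FT X" by (metis image_eqI)
    qed
    show "\<psi> ` FT X \<subseteq> sgen (\<phi> ` GamAll X)"
    proof
      fix a assume "a \<in> \<psi> ` FT X"
      then obtain u where u: "u \<in> GPlus X" "a = \<psi> (rho_class X u)" unfolding FT_def by auto
      then show "a \<in> sgen (\<phi> ` GamAll X)" using psi pr_sgen[OF sk] GP by auto
    qed
  qed
  show ?thesis using hom gen uniq sg regular[OF sk] by blast
qed

end
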